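(* Assume $V=L$. Let $\xi_0,\xi_1,\xi_2,\dots\in\Xi$, let $\vartheta=\bigcup_n\xi_n$, and let $X\in\mathrm{IPS}_\vartheta$. Then $X=\bigcap_n\big((X\restriction\xi_n)\uparrow\vartheta\big)$. In particular, $X=\bigcap_{i\in\vartheta}\big((X\restriction[\subseteq i])\uparrow\vartheta\big)$.
   Context: $T$ is the set of all nonempty finite sequences of countable ordinals, ordered by strict extension $\subset$; $[\subseteq i]=\{j\in T:j\subseteq i\}$. $\Xi$ is the set of all at most countable $\xi\subseteq T$ closed downward under $\subset$. $D=2^\omega$; $D^\xi$ is the product of $\xi$ copies of $D$. For $\eta\subseteq\xi$ in $\Xi$: $x\restriction\eta$ is restriction of $x\in D^\xi$, $X\restriction\eta=\{x\restriction\eta:x\in X\}$ for $X\subseteq D^\xi$, and $Y\uparrow\xi=\{x\in D^\xi:x\restriction\eta\in Y\}$ for $Y\subseteq D^\eta$. For $\zeta\in\Xi$, $\mathrm{IPS}_\zeta$ is the set of all $X\subseteq D^\zeta$ for which there is a homeomorphism $H$ of $D^\zeta$ onto $X$ such that for all $x_0,x_1\in D^\zeta$ and all $\xi\in\Xi$, $\xi\subseteq\zeta$: $x_0\restriction\xi=x_1\restriction\xi\iff H(x_0)\restriction\xi=H(x_1)\restriction\xi$. *)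

theory Defs
  imports "HOL-Analysis.Analysis" "HOL-Library.Sublist"
begin

(* Countable ordinals: elements of a type 'o carrying a well-order r of order type omega_1,
   i.e. well_order_on UNIV r and r =o cardSuc natLeq (stated in the theorem).
   T = nonempty finite sequences (lists) over 'o; strict extension = strict prefix. *)

definition Tset :: "'o list set" where
  "Tset = {i. i \<noteq> []}"

definition below_eq :: "'o list \<Rightarrow> 'o list set" where
  "below_eq i = {j \<in> Tset. prefix j i}"

definition Xi :: "'o list set set" where
  "Xi = {\<xi>. \<xi> \<subseteq> Tset \<and> countable \<xi> \<and>
              (\<forall>i\<in>\<xi>. \<forall>j\<in>Tset. strict_prefix j i \<longrightarrow> j \<in> \<xi>)}"

definition Dtop :: "(nat \<Rightarrow> bool) topology" where
  "Dtop = product_topology (\<lambda>_. discrete_topology UNIV) UNIV"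

definition Dpow :: "'o list set \<Rightarrow> ('o list \<Rightarrow> nat \<Rightarrow> bool) topology" where
  "Dpow \<xi> = product_topology (\<lambda>_. Dtop) \<xi>"

definition proj :: "'o list set \<Rightarrow> ('o list \<Rightarrow> nat \<Rightarrow> bool) set \<Rightarrow> ('o list \<Rightarrow> nat \<Rightarrow> bool) set" where
  "proj \<eta> X = (\<lambda>x. restrict x \<eta>) ` X"

definition lift :: "'o list set \<Rightarrow> 'o list set \<Rightarrow> ('o list \<Rightarrow> nat \<Rightarrow> bool) set \<Rightarrow> ('o list \<Rightarrow> nat \<Rightarrow> bool) set" where
  "lift \<xi> \<eta> Y = {x \<in> topspace (Dpow \<xi>). restrict x \<eta> \<in> Y}"

definition IPS :: "'o list set \<Rightarrow> ('o list \<Rightarrow> nat \<Rightarrow> bool) set set" where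
  "IPS \<zeta> = {X. X \<subseteq> topspace (Dpow \<zeta>) \<and>
     (\<exists>H. homeomorphic_map (Dpow \<zeta>) (subtopology (Dpow \<zeta>) X) H \<and>
          (\<forall>x0\<in>topspace (Dpow \<zeta>). \<forall>x1\<in>topspace (Dpow \<zeta>). \<forall>\<xi>\<in>Xi. \<xi> \<subseteq> \<zeta> \<longrightarrow>
              (restrict x0 \<xi> = restrict x1 \<xi> \<longleftrightarrow> restrict (H x0) \<xi> = restrict (H x1) \<xi>)))}"

end

theory Submission
  imports Defs
begin

lemma top_Dpow: "topspace (Dpow \<theta>) = {f. \<forall>i. i \<notin> \<theta> \<longrightarrow> f i = undefined}"
  unfolding Dpow_def Dtop_def topspace_product_topology PiE_def extensional_def by auto

lemma Xi_int: "A \<in> Xi \<Longrightarrow> B \<in> Xi \<Longrightarrow> A \<inter> B \<in> Xi"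
  unfolding Xi_def by auto

lemma below_eq_Xi: "below_eq i \<in> Xi"
proof -
  have "below_eq i \<subseteq> set (prefixes i)" unfolding below_eq_def by auto
  then have "finite (below_eq i)" using finite_subset by blast
  then show ?thesis unfolding Xi_def below_eq_def
    using countable_finite strict_prefix_def prefix_order.order_trans by (auto simp: below_eq_def)
qed

lemma key:
  assumes XI: "X \<in> IPS \<theta>" and xi: "\<forall>n\<in>I. \<xi> n \<in> Xi \<and> \<xi> n \<subseteq> \<theta>"
    and th: "\<theta> = (\<Union>n\<in>I. \<xi> n)" and y: "y \<in> topspace (Dpow \<theta>)"
    and yp: "\<forall>n\<in>I. restrict y (\<xi> n) \<in> proj (\<xi> n) X"
  shows "y \<in> X"
proof -
  obtain H where hm: "homeomorphic_map (Dpow \<theta>) (subtopology (Dpow \<theta>) X) H"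
    and eq: "\<forall>x0\<in>topspace (Dpow \<theta>). \<forall>x1\<in>topspace (Dpow \<theta>). \<forall>\<xi>\<in>Xi. \<xi> \<subseteq> \<theta> \<longrightarrow>
              (restrict x0 \<xi> = restrict x1 \<xi> \<longleftrightarrow> restrict (H x0) \<xi> = restrict (H x1) \<xi>)"
    and Xsub: "X \<subseteq> topspace (Dpow \<theta>)"
    using XI unfolding IPS_def mem_Collect_eq by blast
  have img: "H ` topspace (Dpow \<theta>) = X"
    using homeomorphic_imp_surjective_map[OF hm] Xsub by (simp add: Int_absorb1)
  have "\<forall>n\<in>I. \<exists>a. a \<in> topspace (Dpow \<theta>) \<and> restrict (H a) (\<xi> n) = restrict y (\<xi> n)"
  proof
    fix n assume "n \<in> I"
    then obtain x where "x \<in> X" "restrict y (\<xi> n) = restrict x (\<xi> n)" using yp unfolding proj_def by auto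
    moreover then obtain a where "a \<in> topspace (Dpow \<theta>)" "x = H a" using img by auto
    ultimately show "\<exists>a. a \<in> topspace (Dpow \<theta>) \<and> restrict (H a) (\<xi> n) = restrict y (\<xi> n)" by auto
  qed
  then obtain A where A: "\<And>n. n\<in>I \<Longrightarrow> A n \<in> topspace (Dpow \<theta>) \<and> restrict (H (A n)) (\<xi> n) = restrict y (\<xi> n)"
    by (metis (no_types))
  have Hy: "H (A n) i = y i" if "n \<in> I" "i \<in> \<xi> n" for n i
    using fun_cong[OF conjunct2[OF A[OF that(1)]], of i] that by simp
  have compat: "A n i = A m i" if "n\<in>I" "m\<in>I" "i \<in> \<xi> n" "i \<in> \<xi> m" for n m i
  proof -
    have "restrict (H (A n)) (\<xi> n \<inter> \<xi> m) = restrict (H (A m)) (\<xi> n \<inter> \<xi> m)"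
      using Hy that by (auto simp: restrict_def)
    moreover have "\<xi> n \<inter> \<xi> m \<in> Xi" using xi that Xi_int by blast
    moreover have "\<xi> n \<inter> \<xi> m \<subseteq> \<theta>" using xi that by blast
    moreover have "A n \<in> topspace (Dpow \<theta>)" "A m \<in> topspace (Dpow \<theta>)" using A that by auto
    ultimately have "restrict (A n) (\<xi> n \<inter> \<xi> m) = restrict (A m) (\<xi> n \<inter> \<xi> m)"
      using eq[rule_format, of "A n" "A m" "\<xi> n \<inter> \<xi> m"] by simp
    from fun_cong[OF this, of i] show ?thesis using that by simp
  qed
  define N where "N i = (SOME n. n\<in>I \<and> i \<in> \<xi> n)" for i
  have N: "N i \<in> I \<and> i \<in> \<xi> (N i)" if "i \<in> \<theta>" for i
    unfolding N_def by (rule someI_ex) (use that th in blast)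
  define a where "a = (\<lambda>i. if i\<in>\<theta> then A (N i) i else undefined)"
  have atop: "a \<in> topspace (Dpow \<theta>)" unfolding top_Dpow a_def by auto
  have ra: "restrict a (\<xi> m) = restrict (A m) (\<xi> m)" if "m \<in> I" for m
  proof
    fix i show "restrict a (\<xi> m) i = restrict (A m) (\<xi> m) i"
    proof (cases "i \<in> \<xi> m")
      case True
      then have "i \<in> \<theta>" using th that by blast
      have "A (N i) i = A m i" using compat[of "N i" m i] N[OF \<open>i \<in> \<theta>\<close>] True that by blast
      then show ?thesis using True \<open>i \<in> \<theta>\<close> by (simp add: a_def)
    qed simp
  qed
  have Ha: "H a i = y i" if "m \<in> I" "i \<in> \<xi> m" for m i
  proof -
    have "restrict (H a) (\<xi> m) = restrict (H (A m)) (\<xi> m)"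
    proof -
      have "A m \<in> topspace (Dpow \<theta>)" using A that by auto
      moreover have "\<xi> m \<in> Xi" "\<xi> m \<subseteq> \<theta>" using xi that by auto
      ultimately show ?thesis using eq[rule_format, OF atop, of "A m" "\<xi> m"] ra[OF that(1)] by simp
    qed
    from fun_cong[OF this, of i] show ?thesis using Hy that by simp
  qed
  have HaX: "H a \<in> X" using img atop by blast
  have "H a = y"
  proof
    fix i show "H a i = y i"
    proof (cases "i \<in> \<theta>")
      case True then show ?thesis using th Ha by blast
    next
      case False then show ?thesis using HaX Xsub y unfolding top_Dpow by auto
    qed
  qed
  then show ?thesis using HaX by simp
qed

theorem lemma2p25:
  fixes r :: "'o rel" and \<xi> :: "nat \<Rightarrow> 'o list set"
    and \<theta> :: "'o list set" and X :: "('o list \<Rightarrow> nat \<Rightarrow> bool) set"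
  assumes "well_order_on UNIV r" and "ordIso2 r (cardSuc natLeq)"
    and "\<And>n. \<xi> n \<in> Xi"
    and "\<theta> = (\<Union>n. \<xi> n)"
    and "X \<in> IPS \<theta>"
  shows "X = (\<Inter>n. lift \<theta> (\<xi> n) (proj (\<xi> n) X)) \<and>
         X = topspace (Dpow \<theta>) \<inter> (\<Inter>i\<in>\<theta>. lift \<theta> (below_eq i) (proj (below_eq i) X))"
proof -
  have Xsub: "X \<subseteq> topspace (Dpow \<theta>)" using assms(5) unfolding IPS_def by auto
  have sub1: "X \<subseteq> lift \<theta> S (proj S X)" for S
    using Xsub unfolding lift_def proj_def by auto
  have A: "X = (\<Inter>n. lift \<theta> (\<xi> n) (proj (\<xi> n) X))"
  proof
    show "X \<subseteq> (\<Inter>n. lift \<theta> (\<xi> n) (proj (\<xi> n) X))" using sub1 by blast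
    show "(\<Inter>n. lift \<theta> (\<xi> n) (proj (\<xi> n) X)) \<subseteq> X"
    proof
      fix y assume "y \<in> (\<Inter>n. lift \<theta> (\<xi> n) (proj (\<xi> n) X))"
      then have "y \<in> topspace (Dpow \<theta>)" "\<forall>n\<in>UNIV. restrict y (\<xi> n) \<in> proj (\<xi> n) X"
        unfolding lift_def by auto
      then show "y \<in> X"
        using key[OF assms(5), of UNIV \<xi> y] assms(3,4) by blast
    qed
  qed
  have bs: "below_eq i \<subseteq> \<theta>" if "i \<in> \<theta>" for i
  proof
    fix j assume j: "j \<in> below_eq i"
    from that assms(4) obtain n where n: "i \<in> \<xi> n" by blast
    show "j \<in> \<theta>"
    proof (cases "j = i")
      case True then show ?thesis using that by simp
    next
      case False
      then have "strict_prefix j i" "j \<in> Tset" using j unfolding below_eq_def by auto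
      then have "j \<in> \<xi> n" using assms(3)[of n] n unfolding Xi_def by blast
      then show ?thesis using assms(4) by blast
    qed
  qed
  have th2: "\<theta> = (\<Union>i\<in>\<theta>. below_eq i)"
  proof
    show "\<theta> \<subseteq> (\<Union>i\<in>\<theta>. below_eq i)"
    proof
      fix i assume "i \<in> \<theta>"
      moreover then have "i \<in> Tset" using assms(3,4) unfolding Xi_def by blast
      ultimately show "i \<in> (\<Union>i\<in>\<theta>. below_eq i)" unfolding below_eq_def by blast
    qed
    show "(\<Union>i\<in>\<theta>. below_eq i) \<subseteq> \<theta>" using bs by blast
  qed
  have B: "X = topspace (Dpow \<theta>) \<inter> (\<Inter>i\<in>\<theta>. lift \<theta> (below_eq i) (proj (below_eq i) X))"
  proof
    show "X \<subseteq> topspace (Dpow \<theta>) \<inter> (\<Inter>i\<in>\<theta>. lift \<theta> (below_eq i) (proj (below_eq i) X))"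
      using sub1 Xsub by blast
    show "topspace (Dpow \<theta>) \<inter> (\<Inter>i\<in>\<theta>. lift \<theta> (below_eq i) (proj (below_eq i) X)) \<subseteq> X"
    proof
      fix y assume "y \<in> topspace (Dpow \<theta>) \<inter> (\<Inter>i\<in>\<theta>. lift \<theta> (below_eq i) (proj (below_eq i) X))"
      then have "y \<in> topspace (Dpow \<theta>)" "\<forall>i\<in>\<theta>. restrict y (below_eq i) \<in> proj (below_eq i) X"
        unfolding lift_def by auto
      then show "y \<in> X"
        using key[OF assms(5), of \<theta> below_eq y] th2 bs below_eq_Xi by blast
    qed
  qed
  show ?thesis using A B by blast
qed

end
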